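(* Consider plain SGD (no momentum) with scalar learning rate $\lambda>0$ and batch size $S$ on linear regression with label noise in the limit $N\to\infty$. Let $G:=2I_D-\lambda\left(1+\frac1S\right)A$ and $\kappa:=\frac{\mathrm{Tr}[AG^{-1}]}{1-\frac\lambda S\mathrm{Tr}[AG^{-1}]}$ (with $G$ invertible and the denominator nonzero). Then the expected training loss $L_{\rm train}:=\mathbb{E}_{\mathbf{w}}[L(\mathbf{w})]$ and the expected test loss $L_{\rm test}:=\frac12\mathbb{E}_{\mathbf{w}}\mathbb{E}_x[((\mathbf{w}-\mathbf{u})^{\mathrm T}x)^2]$ are $$L_{\rm train}=\frac{\sigma^2}{2}\left(1+\frac{\lambda\kappa}{S}\right),\qquad L_{\rm test}=\frac{\lambda\sigma^2}{2S}\kappa.$$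
   Context: Data: $x_i\in\mathbb{R}^D$ i.i.d. $\mathcal N(0,A)$, $A$ symmetric positive definite; $y_i=\mathbf{u}^{\mathrm T}x_i+\epsilon_i$ with $\epsilon_i$ i.i.d., independent of the $x_i$, mean $0$, variance $\sigma^2$; $L(\mathbf{w})=\frac1{2N}\sum_i(\mathbf{w}^{\mathrm T}x_i-y_i)^2$. SGD: $\mathbf{w}_t=\mathbf{w}_{t-1}-\frac\lambda S\sum_{i\in B_t}\nabla\ell_i(\mathbf{w}_{t-1})$. $\mathbb{E}_{\mathbf{w}}$ is over the stationary distribution, which has mean $\mathbf{u}$ and covariance $\Sigma$ satisfying $\lambda(A\Sigma+\Sigma A)-\lambda^2A\Sigma A=\lambda^2C$ with $C=\frac1S(A\Sigma A+\mathrm{Tr}[A\Sigma]A+\sigma^2A)$. *)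

theory Defs
  imports "HOL-Analysis.Analysis" "HOL-Probability.Probability"
begin

text \<open>Population (N to infinity) training loss of linear regression with label noise:
  for x ~ N(0,A) and y = u.x + eps with eps of mean 0 and variance sigma^2 independent of x,
  E_{x,eps}[ 1/2 (w.x - y)^2 ] = 1/2 (w-u)^T A (w-u) + sigma^2/2.\<close>
definition pop_train_loss :: "real^'n^'n \<Rightarrow> real^'n \<Rightarrow> real \<Rightarrow> real^'n \<Rightarrow> real" where
  "pop_train_loss A u \<sigma> w = (1/2) * ((w - u) \<bullet> (A *v (w - u))) + \<sigma>^2 / 2"

text \<open>Pointwise test loss 1/2 E_x[((w-u)^T x)^2] for x ~ N(0,A), i.e. 1/2 (w-u)^T A (w-u).\<close>
definition pointwise_test_loss :: "real^'n^'n \<Rightarrow> real^'n \<Rightarrow> real^'n \<Rightarrow> real" where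
  "pointwise_test_loss A u w = (1/2) * ((w - u) \<bullet> (A *v (w - u)))"

definition cov_matrix :: "(real^'n) measure \<Rightarrow> real^'n \<Rightarrow> real^'n^'n" where
  "cov_matrix M u = (\<chi> i j. integral\<^sup>L M (\<lambda>w. (w$i - u$i) * (w$j - u$j)))"

end

theory Submission
  imports Defs
begin



lemma trace_scaleR: "trace (c *\<^sub>R (M::real^'n^'n)) = c * trace M"
  by (simp add: trace_def sum_distrib_left)

lemma matrix_sub_ldistrib: "(X::real^'n^'n) ** (M - N) = X ** M - X ** N"
  by (vector matrix_matrix_mult_def sum_subtractf field_simps)

lemma matrix_sub_rdistrib: "((M::real^'n^'n) - N) ** X = M ** X - N ** X"
  by (vector matrix_matrix_mult_def sum_subtractf field_simps)

lemma matrix_add_rdistrib: "((M::real^'n^'n) + N) ** X = M ** X + N ** X"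
  by (vector matrix_matrix_mult_def sum.distrib field_simps)

lemma cov_int:
  assumes "prob_space M" "\<And>i. integrable M (\<lambda>w. w$i)" "\<And>i j. integrable M (\<lambda>w. w$i * w$j)"
  shows "integrable M (\<lambda>w::real^'n. (w$i - u$i) * (w$j - u$j))"
proof -
  interpret prob_space M by fact
  have e: "(\<lambda>w::real^'n. (w$i - u$i) * (w$j - u$j)) = (\<lambda>w. w$i * w$j - u$j * w$i - u$i * w$j + u$i*u$j)"
    by (auto simp: algebra_simps)
  show ?thesis unfolding e using assms by (intro Bochner_Integration.integrable_add Bochner_Integration.integrable_diff integrable_mult_right) auto
qed

lemma quad_int:
  assumes "prob_space M" "\<And>i. integrable M (\<lambda>w. w$i)" "\<And>i j. integrable M (\<lambda>w. w$i * w$j)"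
  shows "integral\<^sup>L M (\<lambda>w::real^'n. (w - u) \<bullet> (A *v (w - u))) = trace (A ** cov_matrix M u)"
proof -
  have e: "\<And>w. (w - u) \<bullet> (A *v (w - u)) = (\<Sum>i\<in>UNIV. \<Sum>j\<in>UNIV. A$i$j * ((w$i - u$i) * (w$j - u$j)))"
    by (simp add: inner_vec_def matrix_vector_mult_def sum_distrib_left algebra_simps)
  have "integral\<^sup>L M (\<lambda>w::real^'n. (w - u) \<bullet> (A *v (w - u))) = (\<Sum>i\<in>UNIV. \<Sum>j\<in>UNIV. A$i$j * integral\<^sup>L M (\<lambda>w. (w$i - u$i) * (w$j - u$j)))"
    unfolding e using cov_int[OF assms]
    by (simp add: Bochner_Integration.integral_sum Bochner_Integration.integrable_sum)
  also have "\<dots> = trace (A ** cov_matrix M u)"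
    by (simp add: trace_def matrix_matrix_mult_def cov_matrix_def mult.commute)
  finally show ?thesis .
qed


theorem theorem8:
  fixes A :: "real^'n^'n" and u :: "real^'n" and M :: "(real^'n) measure"
    and lr \<sigma> :: real and S :: nat
  assumes A_sym: "transpose A = A"
    and A_pd: "\<And>x. x \<noteq> 0 \<Longrightarrow> x \<bullet> (A *v x) > 0"
    and lam_pos: "lr > 0"
    and S_pos: "S \<ge> 1"
    and M_prob: "prob_space M"
    and M_space: "space M = UNIV"
    and int1: "\<And>i. integrable M (\<lambda>w. w$i)"
    and int2: "\<And>i j. integrable M (\<lambda>w. w$i * w$j)"
    and mean: "\<And>i. integral\<^sup>L M (\<lambda>w. w$i) = u$i"
    and stat: "let \<Sigma> = cov_matrix M u;
                   C = (1 / real S) *\<^sub>R (A ** \<Sigma> ** A + trace (A ** \<Sigma>) *\<^sub>R A + \<sigma>^2 *\<^sub>R A)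
               in lr *\<^sub>R (A ** \<Sigma> + \<Sigma> ** A) - lr^2 *\<^sub>R (A ** \<Sigma> ** A) = lr^2 *\<^sub>R C"
    and G_inv: "invertible (2 *\<^sub>R mat 1 - (lr * (1 + 1 / real S)) *\<^sub>R A)"
    and denom: "1 - (lr / real S) * trace (A ** matrix_inv (2 *\<^sub>R mat 1 - (lr * (1 + 1 / real S)) *\<^sub>R A)) \<noteq> 0"
  shows "let G = 2 *\<^sub>R mat 1 - (lr * (1 + 1 / real S)) *\<^sub>R A;
             kappa = trace (A ** matrix_inv G) / (1 - (lr / real S) * trace (A ** matrix_inv G))
         in integral\<^sup>L M (pop_train_loss A u \<sigma>) = \<sigma>^2 / 2 * (1 + lr * kappa / real S)
          \<and> integral\<^sup>L M (pointwise_test_loss A u) = lr * \<sigma>^2 / (2 * real S) * kappa"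
  proof -
  define G where "G = 2 *\<^sub>R mat 1 - (lr * (1 + 1 / real S)) *\<^sub>R A"
  define X where "X = matrix_inv G"
  define Sg where "Sg = cov_matrix M u"
  define l' where "l' = lr * (1 + 1 / real S)"
  define t where "t = trace (A ** Sg)"
  define k0 where "k0 = trace (A ** X)"
  have XG: "G ** X = mat 1 \<and> X ** G = mat 1"
    using G_inv unfolding X_def G_def invertible_def matrix_inv_def by (rule someI_ex)
  have GA: "G ** A = A ** G"
    unfolding G_def by (simp add: matrix_sub_ldistrib matrix_sub_rdistrib matrix_scalar_ac scalar_matrix_assoc[symmetric])
  have XA: "X ** A = A ** X"
  proof -
    have "X ** A = X ** A ** (G ** X)" using XG by (simp add: matrix_mul_assoc)
    also have "\<dots> = X ** (G ** A) ** X" using GA by (simp add: matrix_mul_assoc)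
    also have "\<dots> = A ** X" using XG by (simp add: matrix_mul_assoc)
    finally show ?thesis .
  qed
  define f where "f N = trace (X ** N)" for N
  have f_add: "f (N1 + N2) = f N1 + f N2" for N1 N2 unfolding f_def by (simp add: matrix_add_ldistrib trace_add)
  have f_sub: "f (N1 - N2) = f N1 - f N2" for N1 N2 unfolding f_def by (simp add: matrix_sub_ldistrib trace_sub)
  have f_sc: "f (c *\<^sub>R N1) = c * f N1" for c N1 unfolding f_def by (simp add: matrix_scalar_ac scalar_matrix_assoc[symmetric] trace_scaleR)
  define p where "p = trace (X ** A ** Sg)"
  define q where "q = trace (X ** A ** A ** Sg)"
  have f1: "f (A ** Sg) = p" unfolding f_def p_def by (simp add: matrix_mul_assoc)
  have f2: "f (Sg ** A) = p" unfolding f_def p_def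
    by (metis XA matrix_mul_assoc trace_mul_sym)
  have f3: "f (A ** Sg ** A) = q" unfolding f_def q_def
    by (metis XA matrix_mul_assoc trace_mul_sym)
  have f4: "f A = k0" unfolding f_def k0_def using XA by simp
  have "X ** G ** A ** Sg = A ** Sg" using XG by simp
  hence "trace (X ** G ** A ** Sg) = t" by (simp add: t_def)
  moreover have "X ** G ** A ** Sg = 2 *\<^sub>R (X ** A ** Sg) - l' *\<^sub>R (X ** A ** A ** Sg)"
    unfolding G_def l'_def by (simp add: matrix_sub_ldistrib matrix_sub_rdistrib matrix_scalar_ac scalar_matrix_assoc[symmetric] matrix_mul_assoc)
  ultimately have tpq: "2 * p - l' * q = t" by (simp add: trace_sub trace_scaleR p_def q_def)
  from stat have "f (lr *\<^sub>R (A ** Sg + Sg ** A) - lr^2 *\<^sub>R (A ** Sg ** A)) = f (lr^2 *\<^sub>R ((1 / real S) *\<^sub>R (A ** Sg ** A + t *\<^sub>R A + \<sigma>^2 *\<^sub>R A)))"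
    by (simp add: Let_def Sg_def t_def)
  hence "lr * (2 * p) - lr^2 * q = lr^2 * ((1 / real S) * (q + t * k0 + \<sigma>^2 * k0))"
    by (simp add: f_add f_sub f_sc f1 f2 f3 f4)
  hence "lr * (2 * p - lr * q) = lr * (lr * ((1 / real S) * (q + t * k0 + \<sigma>^2 * k0)))"
    by (simp add: power2_eq_square algebra_simps)
  hence "2 * p - lr * q = lr * ((1 / real S) * (q + t * k0 + \<sigma>^2 * k0))"
    using lam_pos by (metis mult_left_cancel less_irrefl)
  hence key: "t = (lr / real S) * (t + \<sigma>^2) * k0"
    using tpq unfolding l'_def by (simp add: algebra_simps)
  have dn: "1 - (lr / real S) * k0 \<noteq> 0" using denom unfolding k0_def X_def G_def .
  have tval: "t = lr * \<sigma>^2 / real S * (k0 / (1 - (lr / real S) * k0))"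
  proof -
    have Sp: "real S > 0" using S_pos by simp
    have d2: "real S - lr * k0 \<noteq> 0" using dn Sp by (simp add: field_simps)
    have "t * real S = lr * (t + \<sigma>^2) * k0" using key Sp by (simp add: field_simps)
    hence "t * (real S - lr * k0) = lr * \<sigma>^2 * k0" by (simp add: algebra_simps)
    hence "t = lr * \<sigma>^2 * k0 / (real S - lr * k0)" using d2 by (simp add: field_simps)
    also have "\<dots> = lr * \<sigma>^2 / real S * (k0 / (1 - (lr / real S) * k0))"
      using Sp d2 by (simp add: field_simps)
    finally show ?thesis .
  qed
  have Q: "integral\<^sup>L M (\<lambda>w::real^'n. (w - u) \<bullet> (A *v (w - u))) = t"
    using quad_int[OF M_prob int1 int2] by (simp add: t_def Sg_def)
  interpret prob_space M by fact
  have int_q: "integrable M (\<lambda>w::real^'n. (w - u) \<bullet> (A *v (w - u)))"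
  proof -
    have e: "\<And>w. (w - u) \<bullet> (A *v (w - u)) = (\<Sum>i\<in>UNIV. \<Sum>j\<in>UNIV. A$i$j * ((w$i - u$i) * (w$j - u$j)))"
      by (simp add: inner_vec_def matrix_vector_mult_def sum_distrib_left algebra_simps)
    show ?thesis unfolding e using cov_int[OF M_prob int1 int2] by (simp add: Bochner_Integration.integrable_sum)
  qed
  have T1: "integral\<^sup>L M (pointwise_test_loss A u) = t / 2"
    unfolding pointwise_test_loss_def using Q by simp
  have T2: "integral\<^sup>L M (pop_train_loss A u \<sigma>) = t / 2 + \<sigma>^2 / 2"
    unfolding pop_train_loss_def using Q int_q by (simp add: prob_space)
  show ?thesis
    unfolding Let_def G_def[symmetric] X_def[symmetric] k0_def[symmetric] T1 T2 tval
    by (simp add: algebra_simps)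
qed

end
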